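(* Let $P\ll Q$ be probability measures, let $\gamma>1$, and let $f:(0,\infty)\to\mathbb R$ be convex with $f(1)=0$, differentiable at $1$ and at $\gamma$, with $f'(\gamma)>f'(1)$. Then $$E_\gamma(P\Vert Q)\le \frac{D_f(P\Vert Q)}{f'(\gamma)-f'(1)}.$$ If in addition $f$ is differentiable on $[\gamma,\infty)$ with $f'$ being $L$-Lipschitz on $[\gamma,\infty)$ for some $L>0$, and $\gamma_0:=\gamma+\sqrt{2\big(f(\gamma)-f'(1)(\gamma-1)\big)/L}$, then $$E_\gamma(P\Vert Q)\le \frac{D_f(P\Vert Q)}{f'(\gamma_0)-f'(1)}.$$
   Context: For convex $f$ on $(0,\infty)$ extended by $f(0):=\lim_{t\downarrow0}f(t)$ and $P\ll Q$, $D_f(P\Vert Q):=\int f(\mathrm dP/\mathrm dQ)\,\mathrm dQ$. The $E_\gamma$-divergence is $E_\gamma(P\Vert Q):=\int[\mathrm dP/\mathrm dQ-\gamma]_+\,\mathrm dQ$ with $[x]_+=\max\{x,0\}$. *)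

theory Defs
  imports "HOL-Probability.Probability"
begin

definition dens :: "'a measure \<Rightarrow> 'a measure \<Rightarrow> 'a \<Rightarrow> real" where
  "dens P Q x = enn2real (RN_deriv Q P x)"

text \<open>Extension of f from (0,inf) to [0,inf): f(0) := lim_{t -> 0+} f t, possibly +inf.\<close>
definition fext :: "(real \<Rightarrow> real) \<Rightarrow> real \<Rightarrow> ereal" where
  "fext f t = (if t = 0 then Lim (at_right 0) (\<lambda>s. ereal (f s)) else ereal (f t))"

definition f_div :: "(real \<Rightarrow> real) \<Rightarrow> 'a measure \<Rightarrow> 'a measure \<Rightarrow> ereal" where
  "f_div f P Q =
     enn2ereal (\<integral>\<^sup>+ x. e2ennreal (fext f (dens P Q x)) \<partial>Q)
   - enn2ereal (\<integral>\<^sup>+ x. e2ennreal (- fext f (dens P Q x)) \<partial>Q)"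

definition E_div :: "real \<Rightarrow> 'a measure \<Rightarrow> 'a measure \<Rightarrow> real" where
  "E_div \<gamma> P Q = (\<integral>x. max (dens P Q x - \<gamma>) 0 \<partial>Q)"

end

theory Submission
  imports Defs
begin

lemma tangent:
  assumes "convex_on {0<..} f" "a > 0" "f differentiable (at a)" "t > (0::real)"
  shows "f t \<ge> f a + deriv f a * (t - a)"
proof -
  have d: "(f has_field_derivative deriv f a) (at a within {0<..})"
    using assms(3) DERIV_deriv_iff_real_differentiable has_field_derivative_at_within by blast
  have "f t - f a \<ge> deriv f a * (t - a)"
    by (rule convex_on_imp_above_tangent[OF assms(1) _ _ _ d]) (use assms in \<open>auto simp: interior_open\<close>)
  then show ?thesis by simp
qed

lemma fext0_lower:
  assumes cv: "convex_on {0<..} f" and f1: "f 1 = 0" and df: "f differentiable (at 1)"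
  shows "fext f 0 \<ge> ereal (- deriv f 1)"
proof -
  define d where "d = deriv f 1"
  define g where "g s = f s - d * (s - 1)" for s
  have gnn: "g s \<ge> 0" if "s > 0" for s
    using tangent[OF cv _ df that] f1 by (simp add: g_def d_def)
  have gmono: "g t \<le> g s" if "0 < s" "s < t" "t < 1" for s t
  proof -
    define l where "l = (1 - t) / (1 - s)"
    have l01: "0 \<le> l" "l \<le> 1" using that by (auto simp: l_def field_simps)
    have "l * (1 - s) = 1 - t" using that by (simp add: l_def)
    hence teq: "t = l * s + (1 - l) * 1" by (simp add: algebra_simps)
    have "f t \<le> l * f s + (1 - l) * f 1"
      using convex_onD[OF cv, of l 1 s] that l01 unfolding teq by (simp add: algebra_simps)
    hence "f t \<le> l * f s" using f1 by simp
    moreover have "d * (t - 1) = l * (d * (s - 1))"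
    proof -
      have "t - 1 = l * (s - 1)" using teq by (simp add: algebra_simps)
      then show ?thesis by simp
    qed
    ultimately have "g t \<le> l * g s" unfolding g_def by (simp add: right_diff_distrib)
    also have "\<dots> \<le> g s" using gnn[of s] that l01 by (simp add: mult_left_le_one_le)
    finally show ?thesis .
  qed
  define l where "l = (SUP s\<in>{0<..<1}. ereal (g s))"
  have lim1: "((\<lambda>s. ereal (g s)) \<longlongrightarrow> l) (at_right 0)"
  proof (rule increasing_tendsto)
    show "\<forall>\<^sub>F n in at_right 0. ereal (g n) \<le> l"
      unfolding eventually_at_right[OF zero_less_one] l_def
      by (intro exI[of _ 1]) (auto intro!: SUP_upper)
  next
    fix x assume "x < l"
    then obtain s0 where s0: "s0 \<in> {0<..<1}" "x < ereal (g s0)"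
      unfolding l_def by (auto simp: less_SUP_iff)
    show "\<forall>\<^sub>F n in at_right 0. x < ereal (g n)"
      unfolding eventually_at_right[OF zero_less_one]
    proof (intro exI[of _ s0] conjI allI impI)
      fix y assume "0 < y" "y < s0"
      then show "x < ereal (g y)" using gmono[of y s0] s0 by (auto intro: less_le_trans)
    qed (use s0 in auto)
  qed
  have lim2: "((\<lambda>s. ereal (d * (s - 1))) \<longlongrightarrow> ereal (d * (0 - 1))) (at_right 0)"
    by (intro tendsto_intros)
  have "((\<lambda>s. ereal (g s) + ereal (d * (s - 1))) \<longlongrightarrow> l + ereal (d * (0 - 1))) (at_right 0)"
    by (rule tendsto_add_ereal_general1[OF _ lim1 lim2]) simp
  hence "((\<lambda>s. ereal (f s)) \<longlongrightarrow> l + ereal (- d)) (at_right 0)"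
    by (simp add: g_def)
  hence "fext f 0 = l + ereal (- d)"
    unfolding fext_def by (simp add: tendsto_Lim)
  moreover have "l \<ge> 0"
  proof -
    have "ereal (g (1/2)) \<le> l" unfolding l_def by (rule SUP_upper) auto
    moreover have "g (1/2) \<ge> 0" by (rule gnn) auto
    ultimately show ?thesis by (meson ereal_less_eq(5) order_trans)
  qed
  ultimately show ?thesis unfolding d_def
    by (metis add.commute add_increasing2 order_refl) 
qed

lemma pointwise:
  assumes cv: "convex_on {0<..} f" and f1: "f 1 = 0" and df: "f differentiable (at 1)"
    and g0: "\<gamma> > 0" and b: "b \<ge> \<gamma>" and db: "f differentiable (at b)"
    and K: "f b - deriv f 1 * (b - 1) \<ge> (deriv f b - deriv f 1) * (b - \<gamma>)"
    and t: "t \<ge> 0"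
  shows "fext f t \<ge> ereal (deriv f 1 * (t - 1) + (deriv f b - deriv f 1) * max (t - \<gamma>) 0)"
proof (cases "t = 0")
  case True
  then show ?thesis using fext0_lower[OF cv f1 df] g0 by simp
next
  case False
  hence tp: "t > 0" using t by simp
  have fe: "fext f t = ereal (f t)" using False by (simp add: fext_def)
  have t1: "f t \<ge> deriv f 1 * (t - 1)" using tangent[OF cv _ df tp] f1 by simp
  show ?thesis
  proof (cases "t \<le> \<gamma>")
    case True
    then show ?thesis using fe t1 by simp
  next
    case False
    have "f t \<ge> f b + deriv f b * (t - b)" using tangent[OF cv _ db tp] g0 b by simp
    then have "f t \<ge> deriv f 1 * (t - 1) + (deriv f b - deriv f 1) * (t - \<gamma>)"
      using K by (simp add: algebra_simps)
    then show ?thesis using fe False by simp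
  qed
qed

lemma integration:
  assumes "prob_space P" and "prob_space Q" and "sets P = sets Q"
    and "absolutely_continuous Q P" and c: "c > 0"
    and pw: "\<And>x. x \<in> space Q \<Longrightarrow> fext f (dens P Q x) \<ge> ereal (d * (dens P Q x - 1) + c * max (dens P Q x - \<gamma>) 0)"
  shows "ereal (E_div \<gamma> P Q) \<le> f_div f P Q / ereal c"
proof -
  interpret Q: prob_space Q by fact
  interpret P: prob_space P by fact
  have den: "density Q (RN_deriv Q P) = P"
    using assms by (intro Q.density_RN_deriv) auto
  have sp: "space P = space Q" using assms(3) by (rule sets_eq_imp_space_eq)
  have "(\<integral>\<^sup>+ x. RN_deriv Q P x \<partial>Q) = emeasure (density Q (RN_deriv Q P)) (space Q)"
    by (subst emeasure_density) (auto intro!: nn_integral_cong)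
  also have "\<dots> = 1" using den P.emeasure_space_1 sp by simp
  finally have int1: "(\<integral>\<^sup>+ x. RN_deriv Q P x \<partial>Q) = 1" .
  have "AE x in Q. RN_deriv Q P x \<noteq> \<infinity>"
    using int1 by (intro nn_integral_PInf_AE) auto
  hence "(\<integral>\<^sup>+ x. ennreal (dens P Q x) \<partial>Q) = (\<integral>\<^sup>+ x. RN_deriv Q P x \<partial>Q)"
    by (intro nn_integral_cong_AE) (auto simp: dens_def less_top)
  hence e1: "(\<integral>\<^sup>+ x. ennreal (dens P Q x) \<partial>Q) = ennreal 1" using int1 by simp
  have dm[measurable]: "dens P Q \<in> borel_measurable Q" unfolding dens_def[abs_def] by measurable
  from e1 have "integrable Q (dens P Q) \<and> integral\<^sup>L Q (dens P Q) = 1"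
    by (subst (asm) nn_integral_eq_integrable) (auto simp: dens_def)
  hence di: "integrable Q (dens P Q)" and d1: "integral\<^sup>L Q (dens P Q) = 1" by auto
  define h where "h x = d * (dens P Q x - 1) + c * max (dens P Q x - \<gamma>) 0" for x
  have ei: "integrable Q (\<lambda>x. max (dens P Q x - \<gamma>) 0)"
    using di by (intro integrable_max integrable_diff) auto
  have hi: "integrable Q h"
    unfolding h_def using di ei by (intro Bochner_Integration.integrable_add Bochner_Integration.integrable_mult_right Bochner_Integration.integrable_diff) auto
  have hint: "integral\<^sup>L Q h = c * E_div \<gamma> P Q"
    unfolding h_def E_div_def using di ei d1
    by (simp add: integral_add integral_mult_right_zero integral_diff Q.prob_space)
  have A: "(\<integral>\<^sup>+ x. ennreal (h x) \<partial>Q) \<le> (\<integral>\<^sup>+ x. e2ennreal (fext f (dens P Q x)) \<partial>Q)"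
    by (intro nn_integral_mono) (metis e2ennreal_ereal e2ennreal_mono h_def pw)
  have B: "(\<integral>\<^sup>+ x. e2ennreal (- fext f (dens P Q x)) \<partial>Q) \<le> (\<integral>\<^sup>+ x. ennreal (- h x) \<partial>Q)"
  proof (intro nn_integral_mono)
    fix x assume "x \<in> space Q"
    then have "ereal (h x) \<le> fext f (dens P Q x)" using pw[of x] unfolding h_def by simp
    then have "- fext f (dens P Q x) \<le> - ereal (h x)" by (rule ereal_minus_le_minus[THEN iffD2])
    then have "- fext f (dens P Q x) \<le> ereal (- h x)" by (simp only: uminus_ereal.simps)
    then show "e2ennreal (- fext f (dens P Q x)) \<le> ennreal (- h x)"
      by (metis e2ennreal_ereal e2ennreal_mono)
  qed
  have fa: "(\<integral>\<^sup>+ x. ennreal (h x) \<partial>Q) < \<infinity>" and fb: "(\<integral>\<^sup>+ x. ennreal (- h x) \<partial>Q) < \<infinity>"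
    using integrableD[OF hi] by (auto simp: less_top)
  have "ereal (c * E_div \<gamma> P Q) = ereal (enn2real (\<integral>\<^sup>+ x. ennreal (h x) \<partial>Q)) - ereal (enn2real (\<integral>\<^sup>+ x. ennreal (- h x) \<partial>Q))"
    using real_lebesgue_integral_def[OF hi] hint by simp
  also have "\<dots> = enn2ereal (\<integral>\<^sup>+ x. ennreal (h x) \<partial>Q) - enn2ereal (\<integral>\<^sup>+ x. ennreal (- h x) \<partial>Q)"
    using fa fb by (simp add: enn2ereal_ennreal[symmetric] del: enn2ereal_ennreal)
  also have "\<dots> \<le> f_div f P Q"
    unfolding f_div_def using A B by (intro ereal_minus_mono) (auto simp: less_eq_ennreal.rep_eq[symmetric])
  finally have "ereal c * ereal (E_div \<gamma> P Q) \<le> f_div f P Q" by simp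
  then show ?thesis using c by (subst ereal_le_divide_pos) auto
qed

theorem mainTheorem6:
  fixes P Q :: "'a measure" and f :: "real \<Rightarrow> real" and \<gamma> :: real
  assumes "prob_space P" and "prob_space Q" and "sets P = sets Q"
    and "absolutely_continuous Q P"
    and "\<gamma> > 1"
    and "convex_on {0<..} f" and "f 1 = 0"
    and "f differentiable (at 1)" and "f differentiable (at \<gamma>)"
    and "deriv f \<gamma> > deriv f 1"
  shows "ereal (E_div \<gamma> P Q) \<le> f_div f P Q / ereal (deriv f \<gamma> - deriv f 1) \<and>
    (\<forall>L>0. (\<forall>x\<in>{\<gamma>..}. f differentiable (at x)) \<longrightarrow>
           L-lipschitz_on {\<gamma>..} (deriv f) \<longrightarrow>
           ereal (E_div \<gamma> P Q) \<le> f_div f P Q /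
             ereal (deriv f (\<gamma> + sqrt (2 * (f \<gamma> - deriv f 1 * (\<gamma> - 1)) / L)) - deriv f 1))"
proof -
  note cv = assms(6) and f1 = assms(7) and df = assms(8) and dfg = assms(9)
  define d where "d = deriv f 1"
  define G where "G = f \<gamma> - d * (\<gamma> - 1)"
  have g0: "\<gamma> > 0" using assms(5) by simp
  have G0: "G \<ge> 0" using tangent[OF cv _ df g0] f1 by (simp add: G_def d_def)
  have dens0: "dens P Q x \<ge> 0" for x by (simp add: dens_def)
  have part1: "ereal (E_div \<gamma> P Q) \<le> f_div f P Q / ereal (deriv f \<gamma> - deriv f 1)"
  proof (rule integration[OF assms(1-4), where d = d])
    show "deriv f \<gamma> - deriv f 1 > 0" using assms(10) by simp
    fix x
    show "ereal (d * (dens P Q x - 1) + (deriv f \<gamma> - deriv f 1) * max (dens P Q x - \<gamma>) 0)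
          \<le> fext f (dens P Q x)"
      unfolding d_def
      by (rule pointwise[OF cv f1 df g0 order_refl dfg _ dens0]) (use G0 in \<open>simp add: G_def d_def\<close>)
  qed
  show ?thesis
  proof (intro conjI part1 allI impI)
    fix L :: real
    assume L: "L > 0" and dif: "\<forall>x\<in>{\<gamma>..}. f differentiable (at x)"
      and lip: "L-lipschitz_on {\<gamma>..} (deriv f)"
    define \<delta> where "\<delta> = sqrt (2 * G / L)"
    define g1 where "g1 = \<gamma> + \<delta>"
    have \<delta>0: "\<delta> \<ge> 0" unfolding \<delta>_def using G0 L by simp
    have \<delta>sq: "L * \<delta>^2 / 2 = G" unfolding \<delta>_def using G0 L by simp
    have g1g: "g1 \<ge> \<gamma>" using \<delta>0 by (simp add: g1_def)
    have g1p: "g1 > 0" using g1g g0 by simp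
    have dg1: "f differentiable (at g1)" using dif g1g by simp
    define d0 where "d0 = deriv f g1"
    have desc: "f g1 \<ge> f \<gamma> + d0 * \<delta> - L * \<delta>^2 / 2"
    proof -
      define H where "H s = f s - d0 * s - L * (g1 - s)^2 / 2" for s
      have "H \<gamma> \<le> H g1"
      proof (rule DERIV_nonneg_imp_nondecreasing[OF g1g])
        fix s assume s: "\<gamma> \<le> s" "s \<le> g1"
        have fs: "(f has_real_derivative deriv f s) (at s)"
          using dif s DERIV_deriv_iff_real_differentiable by auto
        have "(H has_real_derivative deriv f s - d0 + L * (g1 - s)) (at s)"
          unfolding H_def by (auto intro!: derivative_eq_intros fs simp: field_simps)
        moreover have "dist (deriv f g1) (deriv f s) \<le> L * dist g1 s"
          using lipschitz_onD[OF lip, of g1 s] s g1g by simp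
        hence "deriv f s - d0 + L * (g1 - s) \<ge> 0"
          using s by (simp add: dist_real_def d0_def abs_le_iff)
        ultimately show "\<exists>y. (H has_real_derivative y) (at s) \<and> y \<ge> 0" by blast
      qed
      then show ?thesis unfolding H_def g1_def by (simp add: algebra_simps)
    qed
    have K: "f g1 - d * (g1 - 1) \<ge> (d0 - d) * (g1 - \<gamma>)"
      using desc \<delta>sq unfolding G_def g1_def by (simp add: algebra_simps)
    have mono: "d0 \<ge> deriv f \<gamma>"
    proof (cases "\<delta> = 0")
      case True
      then show ?thesis by (simp add: d0_def g1_def)
    next
      case False
      hence \<delta>p: "\<delta> > 0" using \<delta>0 by simp
      have "f g1 \<ge> f \<gamma> + deriv f \<gamma> * (g1 - \<gamma>)" by (rule tangent[OF cv g0 dfg g1p])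
      moreover have "f \<gamma> \<ge> f g1 + d0 * (\<gamma> - g1)" unfolding d0_def by (rule tangent[OF cv g1p dg1 g0])
      ultimately have "(d0 - deriv f \<gamma>) * \<delta> \<ge> 0" by (simp add: g1_def algebra_simps)
      then show ?thesis using \<delta>p by (simp add: zero_le_mult_iff)
    qed
    have "ereal (E_div \<gamma> P Q) \<le> f_div f P Q / ereal (d0 - d)"
    proof (rule integration[OF assms(1-4), where d = d])
      show "d0 - d > 0" using mono assms(10) by (simp add: d_def)
      fix x
      show "ereal (d * (dens P Q x - 1) + (d0 - d) * max (dens P Q x - \<gamma>) 0)
            \<le> fext f (dens P Q x)"
        unfolding d_def d0_def
        by (rule pointwise[OF cv f1 df g0 g1g dg1 _ dens0]) (use K in \<open>simp add: d_def d0_def\<close>)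
    qed
    then show "ereal (E_div \<gamma> P Q) \<le> f_div f P Q /
             ereal (deriv f (\<gamma> + sqrt (2 * (f \<gamma> - deriv f 1 * (\<gamma> - 1)) / L)) - deriv f 1)"
      by (simp add: d0_def g1_def \<delta>_def G_def d_def)
  qed
qed

end
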